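(* Let $\gamma$ be a finite set of interactions over components $B_1,\dots,B_n$, and let $\mathcal{E}^*(\gamma)=\bigwedge_{a\in\mathit{Act}(\gamma)}h_a=\min_{\alpha\in\gamma,\ a\in\alpha}h_\alpha$. (1) $\mathcal{E}^*(\gamma)$ is an inductive predicate of $B^*\|_{\gamma^h}B_i^h$. (2) The equivalence $\exists\mathcal{H}_\gamma.\,\mathcal{E}^*(\gamma)\equiv\mathcal{E}(\gamma)$ holds, for all nonnegative real values of the action history clocks $h_a$, $a\in\mathit{Act}(\gamma)$ (with $\mathcal{H}_\gamma=\{h_\alpha\mid\alpha\in\gamma\}$ ranging over nonnegative reals).
   Context: Components are timed automata $B=(L,A,\mathcal{X},T,\mathsf{tpc},s_0)$ (locations, actions, clocks, edges $(l,(a,g,r),l')$ with guard $g$ and reset set $r$, time progress conditions, initial configuration); states $(l,\mathbf{v})$ with $\mathbf{v}$ a clock valuation in $\mathbb{R}_{\ge0}$; time transitions add the same $\delta\ge0$ to all clocks (allowed if $\mathsf{tpc}$ holds along the way), discrete transitions follow an edge whose guard holds and reset the clocks in $r$ to $0$. A state predicate is inductive if whenever it holds in a state it holds in all its time and discrete successors. For components with pairwise disjoint action sets, an interaction is a nonempty set of actions with at most one action per component; $\mathit{Act}(\gamma)=\bigcup_{\alpha\in\gamma}\alpha$; in a composition under $\gamma$, executing $\alpha=\{a_i\}_{i\in I}$ fires simultaneously one edge labelled $a_i$ in each component $i\in I$, with conjoined guards and united resets, other components unchanged. Action history clocks: $B^h$ adds fresh clocks $h_0$ and $h_a$ ($a\in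 A$), adds $h_a$ to the resets of each edge labelled $a$, initial constraint $c_0\wedge h_0=0\wedge\bigwedge_ah_a>0$; $h_0$ is shared and never reset. Interaction history clocks: $B^*$ has one location $l^*$, actions $a_\alpha$ and clocks $h_\alpha$ for $\alpha\in\gamma$, self-loop edges $(l^*,(a_\alpha,\mathit{true},\{h_\alpha\}),l^* )$, $\mathsf{tpc}(l^* )=\mathit{true}$, initial configuration $(l^*,\mathit{true})$; $\gamma^h=\{\{a_\alpha\}\cup\alpha\mid\alpha\in\gamma\}$; $B^*\|_{\gamma^h}B_i^h$ is the composition of $B^*$ and the $B_i^h$ under $\gamma^h$. Interaction inequalities: $\gamma\ominus\alpha=\{\beta\setminus\alpha\mid\beta\in\gamma,\beta\not\subseteq\alpha\}$; $\mathcal{E}(\emptyset)=\mathit{true}$ and for $\gamma\ne\emptyset$, $\mathcal{E}(\gamma)=\bigvee_{\alpha\in\gamma}\Big(\bigwedge_{a_i,a_j\in\alpha}h_{a_i}=h_{a_j}\wedge\bigwedge_{a_i\in\alpha,\,a_k\in\mathit{Act}(\gamma\ominus\alpha)}h_{a_i}\le h_{a_k}\wedge\mathcal{E}(\gamma\ominus\alpha)\Big)$. *)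

theory Defs
  imports Complex_Main
begin

text \<open>A component B = (L, A, X, T, tpc, s0). Guards and time progress conditions
  are represented semantically as predicates on clock valuations. An edge is
  (l, a, g, r, l').\<close>

type_synonym ('l,'a,'c) edge = "'l \<times> 'a \<times> (('c \<Rightarrow> real) \<Rightarrow> bool) \<times> 'c set \<times> 'l"

record ('l,'a,'c) ta =
  locs :: "'l set"
  acts :: "'a set"
  clks :: "'c set"
  edges :: "('l,'a,'c) edge set"
  tpc :: "'l \<Rightarrow> ('c \<Rightarrow> real) \<Rightarrow> bool"
  init_loc :: 'l
  init_cstr :: "('c \<Rightarrow> real) \<Rightarrow> bool"

definition e_src :: "('l,'a,'c) edge \<Rightarrow> 'l" where "e_src e = fst e"
definition e_act :: "('l,'a,'c) edge \<Rightarrow> 'a" where "e_act e = fst (snd e)"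
definition e_guard :: "('l,'a,'c) edge \<Rightarrow> ('c \<Rightarrow> real) \<Rightarrow> bool" where "e_guard e = fst (snd (snd e))"
definition e_reset :: "('l,'a,'c) edge \<Rightarrow> 'c set" where "e_reset e = fst (snd (snd (snd e)))"
definition e_tgt :: "('l,'a,'c) edge \<Rightarrow> 'l" where "e_tgt e = snd (snd (snd (snd e)))"

text \<open>Components are B 0, ..., B (n-1).\<close>

definition is_interaction :: "(nat \<Rightarrow> ('l,'a,'c) ta) \<Rightarrow> nat \<Rightarrow> 'a set \<Rightarrow> bool" where
  "is_interaction B n \<alpha> \<longleftrightarrow> \<alpha> \<noteq> {} \<and> \<alpha> \<subseteq> (\<Union>i<n. acts (B i)) \<and>
     (\<forall>i<n. \<forall>a\<in>\<alpha> \<inter> acts (B i). \<forall>b\<in>\<alpha> \<inter> acts (B i). a = b)"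

definition Act :: "'a set set \<Rightarrow> 'a set" where
  "Act \<gamma> = \<Union>\<gamma>"

text \<open>Clocks of the composed system: the clocks of component i (tagged with i),
  the action history clocks h_a, the interaction history clocks h_alpha (clocks of B*),
  and the shared clock h_0 (never reset).\<close>

datatype ('a,'c) hclock = CClk nat 'c | HAct 'a | HInt "'a set" | H0

text \<open>A state: a location for each component (B* has a single location l*, omitted)
  and a clock valuation over all clocks.\<close>

type_synonym ('l,'a,'c) hstate = "(nat \<Rightarrow> 'l) \<times> (('a,'c) hclock \<Rightarrow> real)"

definition comp_val :: "(('a,'c) hclock \<Rightarrow> real) \<Rightarrow> nat \<Rightarrow> ('c \<Rightarrow> real)" where
  "comp_val v i = (\<lambda>c. v (CClk i c))"

definition is_state :: "(nat \<Rightarrow> ('l,'a,'c) ta) \<Rightarrow> nat \<Rightarrow> ('l,'a,'c) hstate \<Rightarrow> bool" where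
  "is_state B n s \<longleftrightarrow> (\<forall>i<n. fst s i \<in> locs (B i)) \<and> (\<forall>x. snd s x \<ge> 0)"

text \<open>Time transitions: all clocks advance by delta, allowed if every tpc holds along the way
  (the tpc of B^h is that of B; the tpc of B* is true).\<close>

definition time_step :: "(nat \<Rightarrow> ('l,'a,'c) ta) \<Rightarrow> nat \<Rightarrow> ('l,'a,'c) hstate \<Rightarrow> ('l,'a,'c) hstate \<Rightarrow> bool" where
  "time_step B n s s' \<longleftrightarrow> (\<exists>\<delta>\<ge>0. fst s' = fst s \<and> snd s' = (\<lambda>x. snd s x + \<delta>) \<and>
      (\<forall>i<n. \<forall>t. 0 \<le> t \<and> t \<le> \<delta> \<longrightarrow> tpc (B i) (fst s i) (comp_val (\<lambda>x. snd s x + t) i)))"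

text \<open>Discrete transitions under gamma^h: executing {a_alpha} \<union> alpha fires the self-loop of B*
  (resetting h_alpha) and, in each component i participating in alpha, one edge labelled by
  its action of alpha whose guard holds; resets are united, including the history clocks h_a
  of the executed actions.\<close>

definition disc_step :: "(nat \<Rightarrow> ('l,'a,'c) ta) \<Rightarrow> nat \<Rightarrow> 'a set set \<Rightarrow> ('l,'a,'c) hstate \<Rightarrow> ('l,'a,'c) hstate \<Rightarrow> bool" where
  "disc_step B n \<gamma> s s' \<longleftrightarrow> (\<exists>\<alpha>\<in>\<gamma>. \<exists>e :: nat \<Rightarrow> ('l,'a,'c) edge.
      (\<forall>i<n. \<alpha> \<inter> acts (B i) \<noteq> {} \<longrightarrow>
         e i \<in> edges (B i) \<and> e_src (e i) = fst s i \<and> e_act (e i) \<in> \<alpha> \<inter> acts (B i) \<and>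
         e_guard (e i) (comp_val (snd s) i)) \<and>
      fst s' = (\<lambda>i. if i < n \<and> \<alpha> \<inter> acts (B i) \<noteq> {} then e_tgt (e i) else fst s i) \<and>
      snd s' = (\<lambda>x. if x \<in> {CClk i c | i c. i < n \<and> \<alpha> \<inter> acts (B i) \<noteq> {} \<and> c \<in> e_reset (e i)}
                          \<union> HAct ` \<alpha> \<union> {HInt \<alpha>}
                     then 0 else snd s x))"

definition comp_step :: "(nat \<Rightarrow> ('l,'a,'c) ta) \<Rightarrow> nat \<Rightarrow> 'a set set \<Rightarrow> ('l,'a,'c) hstate \<Rightarrow> ('l,'a,'c) hstate \<Rightarrow> bool" where
  "comp_step B n \<gamma> s s' \<longleftrightarrow> time_step B n s s' \<or> disc_step B n \<gamma> s s'"

definition inductive_pred :: "(nat \<Rightarrow> ('l,'a,'c) ta) \<Rightarrow> nat \<Rightarrow> 'a set set \<Rightarrow> (('l,'a,'c) hstate \<Rightarrow> bool) \<Rightarrow> bool" where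
  "inductive_pred B n \<gamma> P \<longleftrightarrow> (\<forall>s s'. is_state B n s \<longrightarrow> P s \<longrightarrow> comp_step B n \<gamma> s s' \<longrightarrow> P s')"

definition iminus :: "'a set set \<Rightarrow> 'a set \<Rightarrow> 'a set set" (infixl "\<ominus>" 65) where
  "\<gamma> \<ominus> \<alpha> = (\<lambda>\<beta>. \<beta> - \<alpha>) ` {\<beta> \<in> \<gamma>. \<not> \<beta> \<subseteq> \<alpha>}"

lemma card_iminus_less:
  assumes "finite \<gamma>" "\<alpha> \<in> \<gamma>"
  shows "card (\<gamma> \<ominus> \<alpha>) < card \<gamma>"
proof -
  have "card (\<gamma> \<ominus> \<alpha>) \<le> card {\<beta> \<in> \<gamma>. \<not> \<beta> \<subseteq> \<alpha>}"
    unfolding iminus_def using assms by (intro card_image_le) auto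
  also have "\<dots> < card \<gamma>"
    using assms by (intro psubset_card_mono) auto
  finally show ?thesis .
qed

text \<open>E(gamma) over values h a of the action history clocks (gamma is meant to be finite;
  for infinite gamma the value is irrelevant and set to False).\<close>

function Eineq :: "'a set set \<Rightarrow> ('a \<Rightarrow> real) \<Rightarrow> bool" where
  "Eineq \<gamma> h = (if \<gamma> = {} then True else if infinite \<gamma> then False else
     (\<exists>\<alpha>\<in>\<gamma>. (\<forall>ai\<in>\<alpha>. \<forall>aj\<in>\<alpha>. h ai = h aj) \<and>
             (\<forall>ai\<in>\<alpha>. \<forall>ak\<in>Act (\<gamma> \<ominus> \<alpha>). h ai \<le> h ak) \<and>
             Eineq (\<gamma> \<ominus> \<alpha>) h))"
  by pat_completeness auto
termination
  by (relation "measure (\<lambda>(\<gamma>, h). card \<gamma>)") (auto intro: card_iminus_less)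

declare Eineq.simps [simp del]

definition Estar :: "'a set set \<Rightarrow> ('a \<Rightarrow> real) \<Rightarrow> ('a set \<Rightarrow> real) \<Rightarrow> bool" where
  "Estar \<gamma> h hI \<longleftrightarrow> (\<forall>a\<in>Act \<gamma>. h a = Min ((\<lambda>\<alpha>. hI \<alpha>) ` {\<alpha> \<in> \<gamma>. a \<in> \<alpha>}))"

end

theory Submission
  imports Defs
begin

lemma Act_iminus: "Act (\<gamma> \<ominus> \<alpha>) = Act \<gamma> - \<alpha>"
  unfolding Act_def iminus_def by auto

lemma finite_iminus: "finite \<gamma> \<Longrightarrow> finite (\<gamma> \<ominus> \<alpha>)"
  unfolding iminus_def by auto

lemma empty_iminus: "{} \<notin> \<gamma> \<ominus> \<alpha>"
  unfolding iminus_def by auto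

lemma iminus_sel: "b \<notin> \<alpha> \<Longrightarrow> {\<beta>'\<in>\<gamma> \<ominus> \<alpha>. b \<in> \<beta>'} = (\<lambda>\<beta>. \<beta> - \<alpha>) ` {\<beta>\<in>\<gamma>. b \<in> \<beta>}"
  unfolding iminus_def by auto

lemma E_to_star:
  "finite \<gamma> \<Longrightarrow> {} \<notin> \<gamma> \<Longrightarrow> (\<forall>a\<in>Act \<gamma>. h a \<ge> 0) \<Longrightarrow> Eineq \<gamma> h \<Longrightarrow>
   \<exists>hI. (\<forall>\<alpha>\<in>\<gamma>. hI \<alpha> \<ge> 0) \<and> Estar \<gamma> h hI"
proof (induction "card \<gamma>" arbitrary: \<gamma> rule: less_induct)
  case less
  show ?case
  proof (cases "\<gamma> = {}")
    case True
    then show ?thesis by (auto simp: Estar_def Act_def)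
  next
    case False
    have "Eineq \<gamma> h = (\<exists>\<alpha>\<in>\<gamma>. (\<forall>ai\<in>\<alpha>. \<forall>aj\<in>\<alpha>. h ai = h aj) \<and>
             (\<forall>ai\<in>\<alpha>. \<forall>ak\<in>Act (\<gamma> \<ominus> \<alpha>). h ai \<le> h ak) \<and> Eineq (\<gamma> \<ominus> \<alpha>) h)"
      using False less.prems(1) by (simp only: Eineq.simps[of \<gamma> h] if_False simp_thms not_not)
    with less.prems obtain \<alpha> where a: "\<alpha> \<in> \<gamma>" and eq: "\<forall>ai\<in>\<alpha>. \<forall>aj\<in>\<alpha>. h ai = h aj"
      and le: "\<forall>ai\<in>\<alpha>. \<forall>ak\<in>Act (\<gamma> \<ominus> \<alpha>). h ai \<le> h ak" and E: "Eineq (\<gamma> \<ominus> \<alpha>) h"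
      by blast
    have "card (\<gamma> \<ominus> \<alpha>) < card \<gamma>" using card_iminus_less less.prems a by blast
    moreover have "\<forall>a\<in>Act (\<gamma> \<ominus> \<alpha>). h a \<ge> 0" using less.prems(3) by (auto simp: Act_iminus)
    ultimately obtain hI' where nn': "\<forall>\<beta>\<in>\<gamma> \<ominus> \<alpha>. hI' \<beta> \<ge> 0" and st': "Estar (\<gamma> \<ominus> \<alpha>) h hI'"
      using less.hyps[of "\<gamma> \<ominus> \<alpha>"] less.prems E finite_iminus empty_iminus by blast
    have ne: "\<alpha> \<noteq> {}" using a less.prems by auto
    define a0 where "a0 = (SOME a. a \<in> \<alpha>)"
    have a0: "a0 \<in> \<alpha>" using ne unfolding a0_def by (simp add: some_in_eq)
    define c where "c = h a0"
    define hI where "hI = (\<lambda>\<beta>. if \<beta> \<subseteq> \<alpha> then c else hI' (\<beta> - \<alpha>))"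
    have mem: "\<beta> \<in> \<gamma> \<Longrightarrow> \<not> \<beta> \<subseteq> \<alpha> \<Longrightarrow> \<beta> - \<alpha> \<in> \<gamma> \<ominus> \<alpha>" for \<beta>
      unfolding iminus_def by auto
    have "\<forall>\<beta>\<in>\<gamma>. hI \<beta> \<ge> 0"
    proof
      fix \<beta> assume b: "\<beta> \<in> \<gamma>"
      have "a0 \<in> Act \<gamma>" using a a0 by (auto simp: Act_def)
      then show "hI \<beta> \<ge> 0" using less.prems(3) nn' mem[OF b] unfolding hI_def c_def by auto
    qed
    moreover have "Estar \<gamma> h hI"
      unfolding Estar_def
    proof
      fix a assume aA: "a \<in> Act \<gamma>"
      define S where "S = {\<beta> \<in> \<gamma>. a \<in> \<beta>}"
      have fS: "finite S" using less.prems(1) unfolding S_def by (rule rev_finite_subset) blast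
      show "h a = Min (hI ` S)"
      proof (cases "a \<in> \<alpha>")
        case True
        have ha: "h a = c" using eq True a0 unfolding c_def by blast
        have "Min (hI ` S) = c"
        proof (rule Min_eqI)
          show "finite (hI ` S)" using fS by auto
          show "c \<in> hI ` S" using a True unfolding S_def hI_def by force
          fix y assume "y \<in> hI ` S"
          then obtain \<beta> where b: "\<beta> \<in> \<gamma>" "a \<in> \<beta>" and y: "y = hI \<beta>" unfolding S_def by auto
          show "c \<le> y"
          proof (cases "\<beta> \<subseteq> \<alpha>")
            case True then show ?thesis using y unfolding hI_def by simp
          next
            case False
            then obtain b' where b': "b' \<in> \<beta>" "b' \<notin> \<alpha>" by auto
            have bm: "\<beta> - \<alpha> \<in> \<gamma> \<ominus> \<alpha>" using mem b False by auto
            have bA: "b' \<in> Act (\<gamma> \<ominus> \<alpha>)" using bm b' unfolding Act_def by auto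
            have "h b' = Min (hI' ` {\<beta>' \<in> \<gamma> \<ominus> \<alpha>. b' \<in> \<beta>'})" using st' bA unfolding Estar_def by auto
            also have "\<dots> \<le> hI' (\<beta> - \<alpha>)"
              using bm b' finite_iminus[OF less.prems(1), of \<alpha>] by (intro Min_le) auto
            finally have "h b' \<le> y" using y False unfolding hI_def by simp
            moreover have "c \<le> h b'" using le a0 bA unfolding c_def by auto
            ultimately show ?thesis by simp
          qed
        qed
        then show ?thesis using ha by simp
      next
        case False
        have "hI ` S = hI' ` ((\<lambda>\<beta>. \<beta> - \<alpha>) ` S)"
          unfolding image_image S_def hI_def using False by (intro image_cong) auto
        also have "(\<lambda>\<beta>. \<beta> - \<alpha>) ` S = {\<beta>'\<in>\<gamma> \<ominus> \<alpha>. a \<in> \<beta>'}"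
          unfolding S_def using iminus_sel[OF False] by simp
        finally have "hI ` S = hI' ` {\<beta>'\<in>\<gamma> \<ominus> \<alpha>. a \<in> \<beta>'}" .
        moreover have "a \<in> Act (\<gamma> \<ominus> \<alpha>)" using aA False by (simp add: Act_iminus)
        ultimately show ?thesis using st' unfolding Estar_def by auto
      qed
    qed
    ultimately show ?thesis by blast
  qed
qed

lemma star_to_E:
  "finite \<gamma> \<Longrightarrow> Estar \<gamma> h hI \<Longrightarrow> Eineq \<gamma> h"
proof (induction "card \<gamma>" arbitrary: \<gamma> hI rule: less_induct)
  case less
  show ?case
  proof (cases "\<gamma> = {}")
    case True
    then show ?thesis by (simp add: Eineq.simps)
  next
    case False
    define m where "m = Min (hI ` \<gamma>)"
    have "m \<in> hI ` \<gamma>" unfolding m_def using False less.prems by (intro Min_in) auto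
    then obtain \<alpha> where a: "\<alpha> \<in> \<gamma>" and ma: "hI \<alpha> = m" by auto
    have mle: "\<beta> \<in> \<gamma> \<Longrightarrow> m \<le> hI \<beta>" for \<beta> unfolding m_def using less.prems by auto
    have hmin: "a \<in> Act \<gamma> \<Longrightarrow> h a = Min (hI ` {\<beta>\<in>\<gamma>. a \<in> \<beta>})" for a
      using less.prems unfolding Estar_def by auto
    have hle: "a \<in> \<beta> \<Longrightarrow> \<beta> \<in> \<gamma> \<Longrightarrow> h a \<le> hI \<beta>" for a \<beta>
    proof -
      assume "a \<in> \<beta>" "\<beta> \<in> \<gamma>"
      then have "a \<in> Act \<gamma>" unfolding Act_def by auto
      then show ?thesis using hmin \<open>a \<in> \<beta>\<close> \<open>\<beta> \<in> \<gamma>\<close> less.prems(1) by (auto intro: Min_le)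
    qed
    have hge: "a \<in> Act \<gamma> \<Longrightarrow> m \<le> h a" for a
    proof -
      assume aA: "a \<in> Act \<gamma>"
      then have ne: "{\<beta>\<in>\<gamma>. a \<in> \<beta>} \<noteq> {}" unfolding Act_def by auto
      show ?thesis unfolding hmin[OF aA] using ne less.prems(1) mle
        by (subst Min_ge_iff) auto
    qed
    have eqm: "ai \<in> \<alpha> \<Longrightarrow> h ai = m" for ai
    proof -
      assume ai: "ai \<in> \<alpha>"
      then have "ai \<in> Act \<gamma>" using a unfolding Act_def by auto
      then show ?thesis using hge[of ai] hle[OF ai a] ma by linarith
    qed
    define hI' where "hI' = (\<lambda>\<beta>'. Min (hI ` {\<beta>\<in>\<gamma>. \<not> \<beta> \<subseteq> \<alpha> \<and> \<beta> - \<alpha> = \<beta>'}))"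
    have "Estar (\<gamma> \<ominus> \<alpha>) h hI'"
      unfolding Estar_def
    proof
      fix b assume bA: "b \<in> Act (\<gamma> \<ominus> \<alpha>)"
      then have bn: "b \<notin> \<alpha>" and bA': "b \<in> Act \<gamma>" by (auto simp: Act_iminus)
      have fT: "finite {\<beta>'\<in>\<gamma> \<ominus> \<alpha>. b \<in> \<beta>'}" using finite_iminus[OF less.prems(1), of \<alpha>] by simp
      have ge: "\<beta>' \<in> \<gamma> \<ominus> \<alpha> \<Longrightarrow> b \<in> \<beta>' \<Longrightarrow> h b \<le> hI' \<beta>'" for \<beta>'
      proof -
        assume "\<beta>' \<in> \<gamma> \<ominus> \<alpha>" "b \<in> \<beta>'"
        then have ne: "{\<beta>\<in>\<gamma>. \<not> \<beta> \<subseteq> \<alpha> \<and> \<beta> - \<alpha> = \<beta>'} \<noteq> {}" unfolding iminus_def by auto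
        show ?thesis unfolding hI'_def using ne less.prems(1) \<open>b \<in> \<beta>'\<close> hle
          by (subst Min_ge_iff) auto
      qed
      have "h b \<in> hI ` {\<beta>\<in>\<gamma>. b \<in> \<beta>}"
        unfolding hmin[OF bA'] using bA' less.prems(1) by (intro Min_in) (auto simp: Act_def)
      then obtain \<beta>0 where b0: "\<beta>0 \<in> \<gamma>" "b \<in> \<beta>0" "h b = hI \<beta>0" by auto
      have nsub: "\<not> \<beta>0 \<subseteq> \<alpha>" using b0 bn by auto
      have inT: "\<beta>0 - \<alpha> \<in> {\<beta>'\<in>\<gamma> \<ominus> \<alpha>. b \<in> \<beta>'}" using b0 bn nsub unfolding iminus_def by auto
      have "hI' (\<beta>0 - \<alpha>) \<le> hI \<beta>0" unfolding hI'_def using b0 nsub less.prems(1) by (intro Min_le) auto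
      with ge inT b0 have eqb: "hI' (\<beta>0 - \<alpha>) = h b" by fastforce
      show "h b = Min (hI' ` {\<beta>' \<in> \<gamma> \<ominus> \<alpha>. b \<in> \<beta>'})"
        by (rule sym, rule Min_eqI) (use fT ge inT eqb in \<open>auto intro: rev_image_eqI\<close>)
    qed
    then have E: "Eineq (\<gamma> \<ominus> \<alpha>) h"
      using less.hyps[OF card_iminus_less[OF less.prems(1) a]] finite_iminus less.prems(1) by blast
    have c2: "\<forall>ai\<in>\<alpha>. \<forall>ak\<in>Act (\<gamma> \<ominus> \<alpha>). h ai \<le> h ak"
      using eqm hge by (auto simp: Act_iminus)
    show ?thesis
    proof -
      have "\<exists>\<alpha>\<in>\<gamma>. (\<forall>ai\<in>\<alpha>. \<forall>aj\<in>\<alpha>. h ai = h aj) \<and>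
             (\<forall>ai\<in>\<alpha>. \<forall>ak\<in>Act (\<gamma> \<ominus> \<alpha>). h ai \<le> h ak) \<and> Eineq (\<gamma> \<ominus> \<alpha>) h"
        using a eqm c2 E by (intro bexI[of _ \<alpha>]) auto
      then show ?thesis using False less.prems(1) by (subst Eineq.simps[of \<gamma> h]) simp
    qed
  qed
qed

lemma Min_plus: "finite A \<Longrightarrow> A \<noteq> {} \<Longrightarrow> Min ((\<lambda>x. f x + (d::real)) ` A) = Min (f ` A) + d"
proof -
  assume "finite A" "A \<noteq> {}"
  have "mono (\<lambda>x::real. x + d)" by (auto intro: monoI)
  then have "Min (f ` A) + d = Min ((\<lambda>x. x + d) ` (f ` A))"
    using \<open>finite A\<close> \<open>A \<noteq> {}\<close> by (intro mono_Min_commute) auto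
  then show ?thesis by (simp add: image_image)
qed

theorem proposition6:
  fixes B :: "nat \<Rightarrow> ('l,'a,'c) ta" and n :: nat and \<gamma> :: "'a set set"
  assumes disj: "\<forall>i<n. \<forall>j<n. i \<noteq> j \<longrightarrow> acts (B i) \<inter> acts (B j) = {}"
    and fin: "finite \<gamma>"
    and inter: "\<forall>\<alpha>\<in>\<gamma>. is_interaction B n \<alpha>"
  shows "inductive_pred B n \<gamma> (\<lambda>s. Estar \<gamma> (\<lambda>a. snd s (HAct a)) (\<lambda>\<alpha>. snd s (HInt \<alpha>))) \<and>
         (\<forall>h :: 'a \<Rightarrow> real. (\<forall>a\<in>Act \<gamma>. h a \<ge> 0) \<longrightarrow>
           ((\<exists>hI :: 'a set \<Rightarrow> real. (\<forall>\<alpha>\<in>\<gamma>. hI \<alpha> \<ge> 0) \<and> Estar \<gamma> h hI) \<longleftrightarrow> Eineq \<gamma> h))"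
proof
  have ne: "{} \<notin> \<gamma>" using inter unfolding is_interaction_def by auto
  show "\<forall>h :: 'a \<Rightarrow> real. (\<forall>a\<in>Act \<gamma>. h a \<ge> 0) \<longrightarrow>
           ((\<exists>hI :: 'a set \<Rightarrow> real. (\<forall>\<alpha>\<in>\<gamma>. hI \<alpha> \<ge> 0) \<and> Estar \<gamma> h hI) \<longleftrightarrow> Eineq \<gamma> h)"
    using E_to_star[OF fin ne] star_to_E[OF fin] by blast
  show "inductive_pred B n \<gamma> (\<lambda>s. Estar \<gamma> (\<lambda>a. snd s (HAct a)) (\<lambda>\<alpha>. snd s (HInt \<alpha>)))"
    unfolding inductive_pred_def
  proof (intro allI impI)
    fix s s' :: "('l,'a,'c) hstate"
    assume st: "is_state B n s" and E: "Estar \<gamma> (\<lambda>a. snd s (HAct a)) (\<lambda>\<alpha>. snd s (HInt \<alpha>))"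
      and step: "comp_step B n \<gamma> s s'"
    have nn: "\<And>x. snd s x \<ge> 0" using st unfolding is_state_def by auto
    have neS: "a \<in> Act \<gamma> \<Longrightarrow> {\<alpha> \<in> \<gamma>. a \<in> \<alpha>} \<noteq> {}" for a unfolding Act_def by auto
    have fS: "finite {\<alpha> \<in> \<gamma>. a \<in> \<alpha>}" for a using fin by auto
    show "Estar \<gamma> (\<lambda>a. snd s' (HAct a)) (\<lambda>\<alpha>. snd s' (HInt \<alpha>))"
      using step unfolding comp_step_def
    proof
      assume "time_step B n s s'"
      then obtain d where d: "snd s' = (\<lambda>x. snd s x + d)" unfolding time_step_def by auto
      show ?thesis unfolding Estar_def d
      proof
        fix a assume aA: "a \<in> Act \<gamma>"
        have "snd s (HAct a) = Min ((\<lambda>\<alpha>. snd s (HInt \<alpha>)) ` {\<alpha> \<in> \<gamma>. a \<in> \<alpha>})"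
          using E aA unfolding Estar_def by auto
        then show "snd s (HAct a) + d = Min ((\<lambda>\<alpha>. snd s (HInt \<alpha>) + d) ` {\<alpha> \<in> \<gamma>. a \<in> \<alpha>})"
          using Min_plus[OF fS neS[OF aA], of "\<lambda>\<alpha>. snd s (HInt \<alpha>)" d] by simp
      qed
    next
      assume "disc_step B n \<gamma> s s'"
      then obtain \<alpha> and e :: "nat \<Rightarrow> ('l,'a,'c) edge" where a: "\<alpha> \<in> \<gamma>" and
        v0: "snd s' = (\<lambda>x. if x \<in> {CClk i c | i c. i < n \<and> \<alpha> \<inter> acts (B i) \<noteq> {} \<and> c \<in> e_reset (e i)}
                          \<union> HAct ` \<alpha> \<union> {HInt \<alpha>} then 0 else snd s x)"
        unfolding disc_step_def by blast
      define R :: "('a,'c) hclock set" where "R = {CClk i c | i c. i < n \<and> \<alpha> \<inter> acts (B i) \<noteq> {} \<and> c \<in> e_reset (e i)}"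
      have v: "snd s' = (\<lambda>x. if x \<in> R \<union> HAct ` \<alpha> \<union> {HInt \<alpha>} then 0 else snd s x)"
        using v0 unfolding R_def .
      have R: "\<And>b. HAct b \<notin> R" "\<And>b. HInt b \<notin> R" unfolding R_def by auto
      have vA: "snd s' (HAct b) = (if b \<in> \<alpha> then 0 else snd s (HAct b))" for b
        using R unfolding v by auto
      have vI: "snd s' (HInt \<beta>) = (if \<beta> = \<alpha> then 0 else snd s (HInt \<beta>))" for \<beta>
        using R unfolding v by auto
      show ?thesis unfolding Estar_def vA vI
      proof
        fix b assume bA: "b \<in> Act \<gamma>"
        show "(if b \<in> \<alpha> then 0 else snd s (HAct b)) =
              Min ((\<lambda>\<beta>. if \<beta> = \<alpha> then 0 else snd s (HInt \<beta>)) ` {\<beta> \<in> \<gamma>. b \<in> \<beta>})"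
        proof (cases "b \<in> \<alpha>")
          case True
          have "Min ((\<lambda>\<beta>. if \<beta> = \<alpha> then 0 else snd s (HInt \<beta>)) ` {\<beta> \<in> \<gamma>. b \<in> \<beta>}) = 0"
          proof (rule Min_eqI)
            show "finite ((\<lambda>\<beta>. if \<beta> = \<alpha> then 0 else snd s (HInt \<beta>)) ` {\<beta> \<in> \<gamma>. b \<in> \<beta>})"
              using fS by simp
            show "(0::real) \<in> (\<lambda>\<beta>. if \<beta> = \<alpha> then 0 else snd s (HInt \<beta>)) ` {\<beta> \<in> \<gamma>. b \<in> \<beta>}"
              using a True by (intro rev_image_eqI[of \<alpha>]) auto
            fix y assume "y \<in> (\<lambda>\<beta>. if \<beta> = \<alpha> then 0 else snd s (HInt \<beta>)) ` {\<beta> \<in> \<gamma>. b \<in> \<beta>}"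
            then show "0 \<le> y" using nn by auto
          qed
          then show ?thesis using True by simp
        next
          case False
          have "(\<lambda>\<beta>. if \<beta> = \<alpha> then 0 else snd s (HInt \<beta>)) ` {\<beta> \<in> \<gamma>. b \<in> \<beta>}
              = (\<lambda>\<beta>. snd s (HInt \<beta>)) ` {\<beta> \<in> \<gamma>. b \<in> \<beta>}"
            using False by (intro image_cong) auto
          then show ?thesis using False E bA unfolding Estar_def by auto
        qed
      qed
    qed
  qed
qed

end
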